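(* Let $n\ge 2$, $d\ge 3$ be integers and suppose there is a proper real algebraic subvariety $\Psi\subset\mathrm{Sym}(n,d)$ such that every $\mathcal{T}\in\mathrm{Sym}(n,d)\setminus\Psi$ has a unique best rank one approximation, and this approximation is symmetric. Then every $\mathcal{T}\in\mathrm{Sym}(n,d)$ has a symmetric best rank one approximation.
   Context: $\mathrm{Sym}(n,d)$ is the space of real tensors $[t_{i_1,\ldots,i_d}]_{i_1,\ldots,i_d=1}^n$ invariant under all permutations of indices. Norm $\|\mathcal{T}\|=\sqrt{\sum t_{i_1,\ldots,i_d}^2}$; $\mathrm{S}^{n-1}$ is the Euclidean unit sphere in $\mathbb{R}^n$. A best rank one approximation of $\mathcal{T}$ is a tensor $a\,\mathbf{u}_1\otimes\cdots\otimes\mathbf{u}_d$ ($a\in\mathbb{R}$, $\mathbf{u}_j\in\mathrm{S}^{n-1}$) minimizing $\|\mathcal{T}-s\,\mathbf{x}_1\otimes\cdots\otimes\mathbf{x}_d\|$ over $s\in\mathbb{R}$, $\mathbf{x}_j\in\mathrm{S}^{n-1}$; it is symmetric if it is a symmetric tensor, i.e. of the form $b\,\mathbf{u}\otimes\cdots\otimes\mathbf{u}$. *)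

theory Defs
  imports "HOL-Analysis.Analysis" "HOL-Library.Multiset"
begin

text \<open>Tensors of order d over R^n are modelled as functions on index lists
  (nat list => real); only lists of length d with entries < n are relevant,
  and tensors are required to vanish elsewhere (canonical representative).
  Indices are 0-based.\<close>

definition idx :: "nat \<Rightarrow> nat \<Rightarrow> nat list set" where
  "idx n d = {is. length is = d \<and> set is \<subseteq> {..<n}}"

definition tensors :: "nat \<Rightarrow> nat \<Rightarrow> (nat list \<Rightarrow> real) set" where
  "tensors n d = {T. \<forall>is. is \<notin> idx n d \<longrightarrow> T is = 0}"

definition Sym :: "nat \<Rightarrow> nat \<Rightarrow> (nat list \<Rightarrow> real) set" where
  "Sym n d = {T \<in> tensors n d. \<forall>is \<in> idx n d. \<forall>js. mset js = mset is \<longrightarrow> T js = T is}"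

definition tnorm :: "nat \<Rightarrow> nat \<Rightarrow> (nat list \<Rightarrow> real) \<Rightarrow> real" where
  "tnorm n d T = sqrt (\<Sum>is\<in>idx n d. (T is)^2)"

definition sphere_n :: "nat \<Rightarrow> (nat \<Rightarrow> real) set" where
  "sphere_n n = {x. (\<Sum>i<n. (x i)^2) = 1}"

text \<open>The rank one tensor s * x_1 (x) ... (x) x_d (x j is the (j+1)-th factor).\<close>
definition outer :: "nat \<Rightarrow> nat \<Rightarrow> real \<Rightarrow> (nat \<Rightarrow> nat \<Rightarrow> real) \<Rightarrow> (nat list \<Rightarrow> real)" where
  "outer n d s x = (\<lambda>is. if is \<in> idx n d then s * (\<Prod>j<d. x j (is ! j)) else 0)"

definition unit_factors :: "nat \<Rightarrow> nat \<Rightarrow> (nat \<Rightarrow> nat \<Rightarrow> real) set" where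
  "unit_factors n d = {x. \<forall>j<d. x j \<in> sphere_n n}"

definition best_r1 :: "nat \<Rightarrow> nat \<Rightarrow> (nat list \<Rightarrow> real) \<Rightarrow> (nat list \<Rightarrow> real) set" where
  "best_r1 n d T = {outer n d a u | a u. u \<in> unit_factors n d \<and>
     (\<forall>s. \<forall>x \<in> unit_factors n d.
        tnorm n d (\<lambda>is. T is - outer n d a u is) \<le> tnorm n d (\<lambda>is. T is - outer n d s x is))}"

inductive_set poly_funs :: "nat \<Rightarrow> nat \<Rightarrow> ((nat list \<Rightarrow> real) \<Rightarrow> real) set"
  for n d where
  const: "(\<lambda>T. c) \<in> poly_funs n d"
| coord: "is \<in> idx n d \<Longrightarrow> (\<lambda>T. T is) \<in> poly_funs n d"
| add: "p \<in> poly_funs n d \<Longrightarrow> q \<in> poly_funs n d \<Longrightarrow> (\<lambda>T. p T + q T) \<in> poly_funs n d"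
| mult: "p \<in> poly_funs n d \<Longrightarrow> q \<in> poly_funs n d \<Longrightarrow> (\<lambda>T. p T * q T) \<in> poly_funs n d"

definition alg_subvariety :: "nat \<Rightarrow> nat \<Rightarrow> (nat list \<Rightarrow> real) set \<Rightarrow> bool" where
  "alg_subvariety n d \<Psi> \<longleftrightarrow> (\<exists>P \<subseteq> poly_funs n d. \<Psi> = {T \<in> Sym n d. \<forall>p\<in>P. p T = 0})"

end

theory Submission
  imports Defs "HOL-Computational_Algebra.Polynomial"
begin

lemma tnorm_L2: "tnorm n d T = L2_set T (idx n d)"
  by (simp add: tnorm_def L2_set_def)

lemma finite_idx: "finite (idx n d)"
proof -
  have "idx n d = {xs. set xs \<subseteq> {..<n} \<and> length xs = d}" by (auto simp: idx_def)
  thus ?thesis using finite_lists_length_eq[of "{..<n}" d] by simp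
qed

lemma poly_line:
  assumes "p \<in> poly_funs n d"
  shows "\<exists>q. \<forall>t. p (\<lambda>is. A is + t * C is) = poly q t"
  using assms
proof induction
  case (const c) show ?case by (rule exI[of _ "[:c:]"]) simp
next
  case (coord xs) show ?case by (rule exI[of _ "[:A xs, C xs:]"]) (simp add: algebra_simps)
next
  case (add p q)
  then obtain q1 q2 where "\<forall>t. p (\<lambda>is. A is + t * C is) = poly q1 t" "\<forall>t. q (\<lambda>is. A is + t * C is) = poly q2 t" by blast
  then show ?case by (intro exI[of _ "q1 + q2"]) simp
next
  case (mult p q)
  then obtain q1 q2 where "\<forall>t. p (\<lambda>is. A is + t * C is) = poly q1 t" "\<forall>t. q (\<lambda>is. A is + t * C is) = poly q2 t" by blast
  then show ?case by (intro exI[of _ "q1 * q2"]) simp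
qed

lemma tnorm_tendsto:
  assumes "\<And>is. is \<in> idx n d \<Longrightarrow> (\<lambda>k. F k is) \<longlonglongrightarrow> G is"
  shows "(\<lambda>k. tnorm n d (F k)) \<longlonglongrightarrow> tnorm n d G"
  unfolding tnorm_def
  by (intro tendsto_real_sqrt tendsto_sum tendsto_power assms)

lemma outer_tendsto:
  assumes "a \<longlonglongrightarrow> a0" and "\<And>j i. j < d \<Longrightarrow> i < n \<Longrightarrow> (\<lambda>k. u k j i) \<longlonglongrightarrow> u0 j i"
  shows "(\<lambda>k. outer n d (a k) (u k) is) \<longlonglongrightarrow> outer n d a0 u0 is"
proof (cases "is \<in> idx n d")
  case True
  then have "\<And>j. j < d \<Longrightarrow> is ! j < n" by (auto simp: idx_def dest!: nth_mem)
  then show ?thesis using True unfolding outer_def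
    by (auto intro!: tendsto_mult tendsto_prod assms)
next
  case False then show ?thesis by (simp add: outer_def)
qed

lemma subseq_finite:
  fixes X :: "nat \<Rightarrow> 'c \<Rightarrow> real"
  assumes "finite C" and "\<And>c. c \<in> C \<Longrightarrow> bounded (range (\<lambda>k. X k c))"
  shows "\<exists>r. strict_mono r \<and> (\<forall>c\<in>C. convergent (\<lambda>k. X (r k) c))"
  using assms
proof (induction C rule: finite_induct)
  case empty then show ?case by (intro exI[of _ id]) (auto simp: strict_mono_def)
next
  case (insert c C)
  then obtain r where r: "strict_mono r" "\<forall>c\<in>C. convergent (\<lambda>k. X (r k) c)" by auto
  have "bounded (range (\<lambda>k. X (r k) c))"
    by (rule bounded_subset[OF insert.prems[of c]]) auto
  then obtain l r2 where r2: "strict_mono r2" "((\<lambda>k. X (r k) c) \<circ> r2) \<longlonglongrightarrow> l"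
    using bounded_imp_convergent_subsequence by blast
  have "\<forall>c'\<in>insert c C. convergent (\<lambda>k. X ((r \<circ> r2) k) c')"
  proof
    fix c' assume "c' \<in> insert c C"
    then show "convergent (\<lambda>k. X ((r \<circ> r2) k) c')"
    proof
      assume "c' = c" then show ?thesis using r2 by (auto simp: convergent_def o_def)
    next
      assume "c' \<in> C"
      then have "convergent (\<lambda>k. X (r k) c')" using r by auto
      then obtain L where "(\<lambda>k. X (r k) c') \<longlonglongrightarrow> L" by (auto simp: convergent_def)
      from LIMSEQ_subseq_LIMSEQ[OF this r2(1)] show ?thesis by (auto simp: convergent_def o_def)
    qed
  qed
  then show ?case using r(1) r2(1) strict_mono_o by blast
qed

lemma outer_bound:
  assumes u: "u \<in> unit_factors n d" and n: "0 < n"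
  shows "a^2 \<le> real n ^ d * (tnorm n d (outer n d a u))^2"
proof -
  have "\<exists>i<n. 1 / real n \<le> (u j i)^2" if j: "j < d" for j
  proof (rule ccontr)
    assume "\<not> ?thesis"
    then have lt: "\<And>i. i < n \<Longrightarrow> (u j i)^2 < 1 / real n" by auto
    have "(\<Sum>i<n. (u j i)^2) < (\<Sum>i<n. 1 / real n)"
      by (rule sum_strict_mono) (use n lt in auto)
    also have "\<dots> = 1" using n by simp
    finally show False using u j by (auto simp: unit_factors_def sphere_n_def)
  qed
  then obtain i where i: "\<And>j. j < d \<Longrightarrow> i j < n \<and> 1 / real n \<le> (u j (i j))^2" by metis
  define xs where "xs = map i [0..<d]"
  have xs: "xs \<in> idx n d" using i by (auto simp: xs_def idx_def)
  have nth: "\<And>j. j < d \<Longrightarrow> xs ! j = i j" by (simp add: xs_def)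
  have "outer n d a u xs = a * (\<Prod>j<d. u j (i j))"
    using xs nth by (simp add: outer_def)
  then have eq: "(outer n d a u xs)^2 = a^2 * (\<Prod>j<d. (u j (i j))^2)"
    by (simp add: power_mult_distrib prod_power_distrib)
  have "(\<Prod>j<d. 1 / real n) \<le> (\<Prod>j<d. (u j (i j))^2)"
    by (rule prod_mono) (use i n in auto)
  then have p: "(1 / real n)^d \<le> (\<Prod>j<d. (u j (i j))^2)" by simp
  have "(outer n d a u xs)^2 \<le> (\<Sum>ys\<in>idx n d. (outer n d a u ys)^2)"
    by (rule member_le_sum) (use xs finite_idx in auto)
  also have "\<dots> = (tnorm n d (outer n d a u))^2"
    by (simp add: tnorm_def sum_nonneg)
  finally have "a^2 * (1 / real n)^d \<le> (tnorm n d (outer n d a u))^2"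
    using eq p mult_left_mono[OF p, of "a^2"] by simp
  then have "real n ^ d * (a^2 * (1 / real n)^d) \<le> real n ^ d * (tnorm n d (outer n d a u))^2"
    by (simp add: mult_left_mono)
  moreover have "real n ^ d * (a^2 * (1 / real n)^d) = a^2"
    using n by (simp add: power_one_over field_simps)
  ultimately show ?thesis by simp
qed

theorem proposition3p5:
  fixes n d :: nat and \<Psi> :: "(nat list \<Rightarrow> real) set"
  assumes "n \<ge> 2" and "d \<ge> 3"
    and "alg_subvariety n d \<Psi>" and "\<Psi> \<noteq> Sym n d"
    and "\<forall>T \<in> Sym n d - \<Psi>. \<exists>B. best_r1 n d T = {B} \<and> B \<in> Sym n d"
  shows "\<forall>T \<in> Sym n d. \<exists>B \<in> best_r1 n d T. B \<in> Sym n d"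
proof
  fix T assume T: "T \<in> Sym n d"
  have n0: "0 < n" using assms(1) by simp
  obtain P where P: "P \<subseteq> poly_funs n d" and Psi: "\<Psi> = {T \<in> Sym n d. \<forall>p\<in>P. p T = 0}"
    using assms(3) by (auto simp: alg_subvariety_def)
  obtain T1 where T1: "T1 \<in> Sym n d" "T1 \<notin> \<Psi>" using assms(4) Psi by blast
  then obtain p where p: "p \<in> P" "p T1 \<noteq> 0" using Psi by auto
  obtain q where q: "\<forall>t. p (\<lambda>is. T is + t * (T1 is - T is)) = poly q t"
    using poly_line[OF subsetD[OF P p(1)], of T "\<lambda>is. T1 is - T is"] by blast
  have "(\<lambda>is. T is + 1 * (T1 is - T is)) = T1" by auto
  then have "poly q 1 \<noteq> 0" using q p(2) by metis
  then have "q \<noteq> 0" by auto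
  then have fin: "finite {t. poly q t = 0}" by (rule poly_roots_finite)
  have "\<exists>t. t \<in> {0<..<1 / real (Suc k)} \<and> poly q t \<noteq> 0" for k
  proof (rule ccontr)
    assume "\<not> ?thesis"
    then have "{0<..<1 / real (Suc k)} \<subseteq> {t. poly q t = 0}" by auto
    then have "finite {0<..<1 / real (Suc k)}" using fin finite_subset by blast
    moreover have "(0::real) < 1 / real (Suc k)" by simp
    ultimately show False using infinite_Ioo by blast
  qed
  then obtain tt where tt: "\<And>k. tt k \<in> {0<..<1 / real (Suc k)} \<and> poly q (tt k) \<noteq> 0" by metis
  define TT where "TT k = (\<lambda>is. T is + tt k * (T1 is - T is))" for k
  have TTsym: "TT k \<in> Sym n d" for k
  proof -
    have a1: "\<forall>xs. xs \<notin> idx n d \<longrightarrow> T xs = 0 \<and> T1 xs = 0" using T T1(1) by (simp add: Sym_def tensors_def)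
    have a2: "\<forall>xs\<in>idx n d. \<forall>ys. mset ys = mset xs \<longrightarrow> T ys = T xs \<and> T1 ys = T1 xs"
      using T T1(1) unfolding Sym_def by blast
    show ?thesis unfolding Sym_def tensors_def
    proof (intro CollectI conjI allI impI ballI)
      fix xs assume "xs \<notin> idx n d" then show "TT k xs = 0" using a1 by (simp add: TT_def)
    next
      fix xs ys assume "xs \<in> idx n d" "mset ys = mset xs"
      then have "T ys = T xs" "T1 ys = T1 xs" using a2 by blast+
      then show "TT k ys = TT k xs" by (simp add: TT_def)
    qed
  qed
  have TTpsi: "TT k \<notin> \<Psi>" for k
    using tt[of k] q p(1) Psi unfolding TT_def by (auto intro!: bexI[of _ p])
  have tt0: "tt \<longlonglongrightarrow> 0"
  proof (rule real_tendsto_sandwich[where f="\<lambda>_. 0" and h="\<lambda>k. inverse (real (Suc k))"])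
    show "\<forall>\<^sub>F k in sequentially. 0 \<le> tt k"
    proof (rule always_eventually, rule allI)
      fix k show "0 \<le> tt k" using tt[of k] by simp
    qed
    show "\<forall>\<^sub>F k in sequentially. tt k \<le> inverse (real (Suc k))"
    proof (rule always_eventually, rule allI)
      fix k show "tt k \<le> inverse (real (Suc k))" using tt[of k] by (simp add: inverse_eq_divide)
    qed
    show "(\<lambda>_. 0::real) \<longlonglongrightarrow> 0" by simp
    show "(\<lambda>k. inverse (real (Suc k))) \<longlonglongrightarrow> 0" by (rule LIMSEQ_inverse_real_of_nat)
  qed
  have TTlim: "(\<lambda>k. TT k xs) \<longlonglongrightarrow> T xs" for xs
  proof -
    have "(\<lambda>k. T xs + tt k * (T1 xs - T xs)) \<longlonglongrightarrow> T xs + 0 * (T1 xs - T xs)"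
      by (intro tendsto_intros tt0)
    then show ?thesis by (simp add: TT_def)
  qed
  define Q where "Q k a u \<longleftrightarrow> outer n d a u \<in> Sym n d \<and> u \<in> unit_factors n d \<and>
     (\<forall>s. \<forall>x \<in> unit_factors n d.
        tnorm n d (\<lambda>is. TT k is - outer n d a u is) \<le> tnorm n d (\<lambda>is. TT k is - outer n d s x is))" for k a u
  have "\<exists>au. Q k (fst au) (snd au)" for k
  proof -
    obtain B where B: "best_r1 n d (TT k) = {B}" "B \<in> Sym n d" using assms(5) TTsym TTpsi by blast
    then have "B \<in> best_r1 n d (TT k)" by simp
    then obtain a0 u0 where "B = outer n d a0 u0" "u0 \<in> unit_factors n d"
      "\<forall>s. \<forall>x \<in> unit_factors n d.
        tnorm n d (\<lambda>is. TT k is - outer n d a0 u0 is) \<le> tnorm n d (\<lambda>is. TT k is - outer n d s x is)"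
      unfolding best_r1_def by blast
    then have "Q k a0 u0" using B(2) by (simp add: Q_def)
    then show ?thesis by (intro exI[of _ "(a0, u0)"]) simp
  qed
  then have "\<forall>k. \<exists>au. Q k (fst au) (snd au)" by blast
  then have "\<exists>au. \<forall>k. Q k (fst (au k)) (snd (au k))" by (rule choice)
  then obtain au where au0: "\<forall>k. Q k (fst (au k)) (snd (au k))" by (elim exE)
  define a where "a k = fst (au k)" for k
  define u where "u k = snd (au k)" for k
  have Qk: "Q k (a k) (u k)" for k using au0 unfolding a_def u_def by blast
  have au: "\<And>k. outer n d (a k) (u k) \<in> Sym n d" "\<And>k. u k \<in> unit_factors n d"
    "\<And>k s x. x \<in> unit_factors n d \<Longrightarrow>
        tnorm n d (\<lambda>is. TT k is - outer n d (a k) (u k) is) \<le> tnorm n d (\<lambda>is. TT k is - outer n d s x is)"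
    using Qk unfolding Q_def by blast+
  have "Bseq (\<lambda>k. tnorm n d (TT k))"
    using tnorm_tendsto[of n d TT T, OF TTlim] by (intro convergent_imp_Bseq) (auto simp: convergent_def)
  then obtain K where K: "K > 0" "\<forall>k. norm (tnorm n d (TT k)) \<le> K" by (rule BseqE)
  define x0 where "x0 = (\<lambda>(j::nat) (i::nat). if i = 0 then 1 else (0::real))"
  have x0: "x0 \<in> unit_factors n d"
  proof -
    have "(\<Sum>i<n. (x0 j i)^2) = (\<Sum>i<n. if i = 0 then 1 else 0)" for j
      by (rule sum.cong) (auto simp: x0_def)
    then show ?thesis using n0 by (auto simp: unit_factors_def sphere_n_def)
  qed
  have zero: "outer n d 0 x0 = (\<lambda>_. 0)" by (auto simp: outer_def)
  have abound: "\<bar>a k\<bar> \<le> sqrt (real n ^ d) * (2 * K)" for k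
  proof -
    let ?B = "outer n d (a k) (u k)"
    have h1: "tnorm n d (\<lambda>is. TT k is - ?B is) \<le> tnorm n d (TT k)"
      using au(3)[OF x0, of k 0] zero by simp
    have "L2_set (\<lambda>is. TT k is + (?B is - TT k is)) (idx n d) \<le> L2_set (TT k) (idx n d) + L2_set (\<lambda>is. ?B is - TT k is) (idx n d)"
      by (rule L2_set_triangle_ineq)
    moreover have "L2_set (\<lambda>is. ?B is - TT k is) (idx n d) = L2_set (\<lambda>is. TT k is - ?B is) (idx n d)"
      by (simp add: L2_set_def power2_commute)
    ultimately have "tnorm n d ?B \<le> tnorm n d (TT k) + tnorm n d (\<lambda>is. TT k is - ?B is)"
      by (simp add: tnorm_L2)
    also have "\<dots> \<le> 2 * K" using h1 K(2)[rule_format, of k] by simp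
    finally have tb: "tnorm n d ?B \<le> 2 * K" .
    have "(tnorm n d ?B)^2 \<le> (2 * K)^2"
      by (rule power_mono[OF tb]) (simp add: tnorm_def sum_nonneg)
    then have "(a k)^2 \<le> real n ^ d * (2 * K)^2"
      using order_trans[OF outer_bound[OF au(2)[of k] n0, of "a k"] mult_left_mono[of "(tnorm n d ?B)^2" "(2*K)^2" "real n ^ d"]]
      by simp
    also have "\<dots> = (sqrt (real n ^ d) * (2 * K))^2" by (simp add: power_mult_distrib)
    finally have "\<bar>a k\<bar>^2 \<le> (sqrt (real n ^ d) * (2 * K))^2" by simp
    then show ?thesis by (rule power2_le_imp_le) (use K(1) in simp)
  qed
  have ubound: "\<bar>u k j i\<bar> \<le> 1" if "j < d" "i < n" for k j i
  proof -
    have "(u k j i)^2 \<le> (\<Sum>i<n. (u k j i)^2)" by (rule member_le_sum) (use that in auto)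
    also have "\<dots> = 1" using au(2)[of k] that by (auto simp: unit_factors_def sphere_n_def)
    finally show ?thesis by (simp add: abs_square_le_1)
  qed
  have "bounded (range a)"
    unfolding bounded_iff using abound by auto
  then obtain la r1 where r1: "strict_mono r1" "(a \<circ> r1) \<longlonglongrightarrow> la"
    using bounded_imp_convergent_subsequence by blast
  have "\<exists>r. strict_mono r \<and> (\<forall>c\<in>{..<d} \<times> {..<n}. convergent (\<lambda>k. (\<lambda>k (j, i). u (r1 k) j i) (r k) c))"
  proof (rule subseq_finite)
    fix c assume "c \<in> {..<d} \<times> {..<n}"
    then show "bounded (range (\<lambda>k. (\<lambda>k (j, i). u (r1 k) j i) k c))"
      unfolding bounded_iff using ubound by (auto split: prod.splits intro!: exI[of _ 1])
  qed simp
  then obtain r2 where r2: "strict_mono r2" "\<And>j i. j < d \<Longrightarrow> i < n \<Longrightarrow> convergent (\<lambda>k. u (r1 (r2 k)) j i)"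
    by fastforce
  define r where "r = r1 \<circ> r2"
  have rmono: "strict_mono r" unfolding r_def using r1(1) r2(1) by (rule strict_mono_o)
  have ar: "(\<lambda>k. a (r k)) \<longlonglongrightarrow> la"
    using LIMSEQ_subseq_LIMSEQ[OF r1(2) r2(1)] by (simp add: r_def o_def)
  define u0 where "u0 j i = lim (\<lambda>k. u (r k) j i)" for j i
  have ur: "(\<lambda>k. u (r k) j i) \<longlonglongrightarrow> u0 j i" if "j < d" "i < n" for j i
    using r2(2)[OF that] by (simp add: r_def u0_def convergent_LIMSEQ_iff)
  define B where "B = outer n d la u0"
  have Blim: "(\<lambda>k. outer n d (a (r k)) (u (r k)) xs) \<longlonglongrightarrow> B xs" for xs
    unfolding B_def by (rule outer_tendsto[OF ar ur])
  have u0unit: "u0 \<in> unit_factors n d"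
    unfolding unit_factors_def sphere_n_def
  proof (intro allI impI CollectI)
    fix j assume j: "j < d"
    have "(\<lambda>k. \<Sum>i<n. (u (r k) j i)^2) \<longlonglongrightarrow> (\<Sum>i<n. (u0 j i)^2)"
      by (intro tendsto_sum tendsto_power ur j) simp
    moreover have "(\<lambda>k. \<Sum>i<n. (u (r k) j i)^2) = (\<lambda>k. 1)"
      using au(2) j by (auto simp: unit_factors_def sphere_n_def)
    ultimately show "(\<Sum>i<n. (u0 j i)^2) = 1"
      using LIMSEQ_unique tendsto_const by metis
  qed
  have opt: "tnorm n d (\<lambda>is. T is - B is) \<le> tnorm n d (\<lambda>is. T is - outer n d s x is)"
    if x: "x \<in> unit_factors n d" for s x
  proof (rule tendsto_le[OF trivial_limit_sequentially])
    show "(\<lambda>k. tnorm n d (\<lambda>is. TT (r k) is - outer n d s x is)) \<longlonglongrightarrow> tnorm n d (\<lambda>is. T is - outer n d s x is)"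
      by (rule tnorm_tendsto) (intro tendsto_diff TTlim tendsto_const LIMSEQ_subseq_LIMSEQ[OF TTlim, unfolded o_def] rmono)
    show "(\<lambda>k. tnorm n d (\<lambda>is. TT (r k) is - outer n d (a (r k)) (u (r k)) is)) \<longlonglongrightarrow> tnorm n d (\<lambda>is. T is - B is)"
      by (rule tnorm_tendsto) (intro tendsto_diff Blim LIMSEQ_subseq_LIMSEQ[OF TTlim, unfolded o_def] rmono)
    show "\<forall>\<^sub>F k in sequentially. tnorm n d (\<lambda>is. TT (r k) is - outer n d (a (r k)) (u (r k)) is) \<le> tnorm n d (\<lambda>is. TT (r k) is - outer n d s x is)"
      using au(3)[OF x] by (intro always_eventually) auto
  qed
  have Bsym: "B \<in> Sym n d"
    unfolding Sym_def tensors_def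
  proof (intro CollectI conjI allI impI ballI)
    fix xs assume "xs \<notin> idx n d" then show "B xs = 0" by (simp add: B_def outer_def)
  next
    fix xs ys assume xs: "xs \<in> idx n d" and m: "mset ys = mset xs"
    have e: "outer n d (a (r k)) (u (r k)) ys = outer n d (a (r k)) (u (r k)) xs" for k
      using au(1)[of "r k"] xs m unfolding Sym_def by blast
    have "(\<lambda>k. outer n d (a (r k)) (u (r k)) ys) = (\<lambda>k. outer n d (a (r k)) (u (r k)) xs)"
      using e by (rule ext)
    then show "B ys = B xs" using Blim[of ys] Blim[of xs] LIMSEQ_unique by metis
  qed
  have "B \<in> best_r1 n d T"
    unfolding best_r1_def B_def using u0unit opt[unfolded B_def] by blast
  then show "\<exists>B \<in> best_r1 n d T. B \<in> Sym n d" using Bsym by blast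
qed

end
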